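(* Let $(ABCD)$ be a quadrilateral in the Euclidean plane whose diagonals are orthogonal and whose vertex angles all lie in $[\eta,2\pi-\eta]$ for some $\eta>0$. For any two points $M,M'$ on the boundary of the quadrilateral, let $\ell$ be the minimal length of a path from $M$ to $M'$ along the boundary of $(ABCD)$. Then $\frac{MM'}{\ell}\ge\frac{\sin\eta}{4}$. *)

theory Defs
  imports "HOL-Analysis.Analysis"
begin

text \<open>Angle at vertex Q of the polygon with neighbours P (previous) and R (next):
  the counterclockwise angle turning the ray Q->R onto the ray Q->P, in [0, 2pi).
  For a counterclockwise-oriented polygon this is the interior angle; for a clockwise one
  the interior angle is 2pi minus it. Since the condition [eta, 2pi - eta] is symmetric
  under t -> 2pi - t, the orientation does not matter.\<close>
definition vertex_angle :: "complex \<Rightarrow> complex \<Rightarrow> complex \<Rightarrow> real" where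
  "vertex_angle P Q R = (let t = Arg ((P - Q) / (R - Q)) in if t < 0 then t + 2 * pi else t)"

definition perimeter4 :: "complex \<Rightarrow> complex \<Rightarrow> complex \<Rightarrow> complex \<Rightarrow> real" where
  "perimeter4 A B C D = dist A B + dist B C + dist C D + dist D A"

definition bpoint :: "complex \<Rightarrow> complex \<Rightarrow> complex \<Rightarrow> complex \<Rightarrow> real \<Rightarrow> complex" where
  "bpoint A B C D s =
    (let a = dist A B; b = dist B C; c = dist C D; d = dist D A in
     if s \<le> a then linepath A B (s / a)
     else if s \<le> a + b then linepath B C ((s - a) / b)
     else if s \<le> a + b + c then linepath C D ((s - a - b) / c)
     else linepath D A ((s - a - b - c) / d))"

definition bdist :: "complex \<Rightarrow> complex \<Rightarrow> complex \<Rightarrow> complex \<Rightarrow> real \<Rightarrow> real \<Rightarrow> real" where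
  "bdist A B C D s s' = min \<bar>s - s'\<bar> (perimeter4 A B C D - \<bar>s - s'\<bar>)"

definition simple_quad :: "complex \<Rightarrow> complex \<Rightarrow> complex \<Rightarrow> complex \<Rightarrow> bool" where
  "simple_quad A B C D \<longleftrightarrow>
     distinct [A, B, C, D] \<and>
     closed_segment A B \<inter> closed_segment C D = {} \<and>
     closed_segment B C \<inter> closed_segment D A = {} \<and>
     closed_segment A B \<inter> closed_segment B C = {B} \<and>
     closed_segment B C \<inter> closed_segment C D = {C} \<and>
     closed_segment C D \<inter> closed_segment D A = {D} \<and>
     closed_segment D A \<inter> closed_segment A B = {A}"

end

theory Submission
  imports Defs
begin

lemma inner_cmod: "(x::complex) \<bullet> y = Re (x * cnj y)"
  by (simp add: inner_complex_def)

lemma angle_cos: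
  assumes "P \<noteq> V" "R \<noteq> V" "0 < \<eta>" "\<eta> \<le> vertex_angle P V R" "vertex_angle P V R \<le> 2*pi - \<eta>"
  shows "(P - V) \<bullet> (R - V) \<le> cos \<eta> * (norm (P - V) * norm (R - V))"
proof -
  define z where "z = (P - V) / (R - V)"
  have z0: "z \<noteq> 0" using assms by (simp add: z_def)
  have c1: "cos (Arg z) \<le> cos \<eta>"
  proof (cases "Arg z < 0")
    case True
    then have th: "vertex_angle P V R = Arg z + 2*pi" by (simp add: vertex_angle_def z_def Let_def)
    have "- Arg z \<le> pi" using Arg_bounded[of z] by linarith
    moreover have "\<eta> \<le> - Arg z" using assms(5) th by linarith
    ultimately have "cos (- Arg z) \<le> cos \<eta>" using assms(3) by (intro cos_monotone_0_pi_le) auto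
    then show ?thesis by simp
  next
    case False
    then have th: "vertex_angle P V R = Arg z" by (simp add: vertex_angle_def z_def Let_def)
    have "Arg z \<le> pi" using Arg_bounded[of z] by linarith
    then show ?thesis using assms(3,4) th by (intro cos_monotone_0_pi_le) auto
  qed
  have "cos (Arg z) = Re z / norm z" using z0 by (rule cos_Arg)
  also have "Re z = ((P - V) \<bullet> (R - V)) / (norm (R - V))^2"
    by (simp add: z_def Re_divide' inner_complex_def)
  also have "norm z = norm (P - V) / norm (R - V)" by (simp add: z_def norm_divide)
  finally have "cos (Arg z) = ((P - V) \<bullet> (R - V)) / (norm (P - V) * norm (R - V))"
    using assms(1,2) by (simp add: field_simps power2_eq_square)
  with c1 have "((P - V) \<bullet> (R - V)) / (norm (P - V) * norm (R - V)) \<le> cos \<eta>" by simp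
  moreover have "norm (P - V) * norm (R - V) > 0" using assms(1,2) by simp
  ultimately show ?thesis by (simp add: divide_le_eq)
qed

lemma eta_le_pi: "\<eta> \<le> t \<Longrightarrow> t \<le> 2*pi - \<eta> \<Longrightarrow> \<eta> \<le> pi" by linarith

lemma adj:
  assumes "P \<noteq> V" "R \<noteq> V" "0 < \<eta>" "\<eta> \<le> vertex_angle P V R" "vertex_angle P V R \<le> 2*pi - \<eta>"
    and X: "X \<in> closed_segment V P" and Y: "Y \<in> closed_segment V R"
  shows "sin \<eta> / 2 * (dist X V + dist V Y) \<le> dist X Y"
proof -
  have h: "(P - V) \<bullet> (R - V) \<le> cos \<eta> * (norm (P - V) * norm (R - V))" using angle_cos[OF assms(1-5)] .
  have epi: "\<eta> \<le> pi" using assms(4,5) by linarith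
  have s0: "sin \<eta> \<ge> 0" using epi assms(3) by (simp add: sin_ge_zero)
  obtain x where x: "0 \<le> x" "x \<le> 1" "X = (1 - x) *\<^sub>R V + x *\<^sub>R P" using X by (auto simp: closed_segment_def)
  obtain y where y: "0 \<le> y" "y \<le> 1" "Y = (1 - y) *\<^sub>R V + y *\<^sub>R R" using Y by (auto simp: closed_segment_def)
  define u where "u = P - V"
  define w where "w = R - V"
  have Xe: "X - V = x *\<^sub>R u" by (simp add: x(3) u_def algebra_simps)
  have Ye: "V - Y = - (y *\<^sub>R w)" by (simp add: y(3) w_def algebra_simps)
  have XY: "X - Y = x *\<^sub>R u - y *\<^sub>R w" by (simp add: x(3) y(3) u_def w_def algebra_simps)
  define a where "a = x * norm u"
  define b where "b = y * norm w"
  have da: "dist X V = a" by (simp add: dist_norm Xe a_def x(1))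
  have db: "dist V Y = b" by (simp add: dist_norm Ye b_def y(1))
  have a0: "a \<ge> 0" "b \<ge> 0" by (auto simp: a_def b_def x y)
  define c where "c = cos \<eta>"
  have c1: "c \<le> 1" "-1 \<le> c" by (auto simp: c_def)
  have hh: "x * y * (u \<bullet> w) \<le> c * a * b"
  proof -
    have "x * y * (u \<bullet> w) \<le> x * y * (c * (norm u * norm w))"
      using h x(1) y(1) by (intro mult_left_mono) (auto simp: u_def w_def c_def)
    then show ?thesis by (simp add: a_def b_def algebra_simps)
  qed
  have sq: "(dist X Y)^2 = a^2 + b^2 - 2 * (x * y * (u \<bullet> w))"
  proof -
    have "(dist X Y)^2 = (x *\<^sub>R u - y *\<^sub>R w) \<bullet> (x *\<^sub>R u - y *\<^sub>R w)"
      by (simp add: dist_norm XY power2_norm_eq_inner)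
    also have "\<dots> = x^2 * (u \<bullet> u) + y^2 * (w \<bullet> w) - 2 * (x * y * (u \<bullet> w))"
      by (simp add: inner_diff_left inner_diff_right power2_eq_square algebra_simps inner_commute)
    finally show ?thesis by (simp add: a_def b_def power_mult_distrib dot_square_norm)
  qed
  have "(dist X Y)^2 \<ge> a^2 + b^2 - 2 * c * a * b" using sq hh by linarith
  moreover have "a^2 + b^2 - 2 * c * a * b - (a + b)^2 * (1 - c) / 2 = (1 + c) / 2 * (a - b)^2"
  proof -
    have "2 * (a^2 + b^2 - 2 * c * a * b) - (a + b)^2 * (1 - c) = (1 + c) * (a - b)^2"
      by algebra
    then show ?thesis by (simp add: field_simps)
  qed
  moreover have "(1 + c) / 2 * (a - b)^2 \<ge> 0" using c1 by simp
  moreover have "(a + b)^2 * (1 - c) / 2 \<ge> (sin \<eta> / 2 * (a + b))^2"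
  proof -
    have "(sin \<eta>)^2 = (1 - c) * (1 + c)" by (simp add: c_def sin_squared_eq algebra_simps power2_eq_square)
    moreover have "(1 - c) * (1 + c) \<le> (1 - c) * 2" using c1 by (intro mult_left_mono) auto
    ultimately have "(sin \<eta>)^2 / 4 \<le> (1 - c) / 2" by simp
    then have "(a + b)^2 * ((sin \<eta>)^2 / 4) \<le> (a + b)^2 * ((1 - c) / 2)" by (intro mult_left_mono) auto
    then show ?thesis by (simp add: power_mult_distrib power_divide mult.commute)
  qed
  ultimately have "(sin \<eta> / 2 * (a + b))^2 \<le> (dist X Y)^2" by linarith
  then have "sin \<eta> / 2 * (a + b) \<le> dist X Y" by (rule power2_le_imp_le) simp
  then show ?thesis by (simp add: da db)
qed

lemma orth2:
  fixes v E1 E2 :: complex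
  assumes "v \<bullet> E1 = 0" "v \<bullet> E2 = 0" "E1 \<bullet> E2 = 0" "E1 \<noteq> 0" "E2 \<noteq> 0"
  shows "v = 0"
proof -
  define x1 where "x1 = Re E1"
  define y1 where "y1 = Im E1"
  define x2 where "x2 = Re E2"
  define y2 where "y2 = Im E2"
  define a where "a = Re v"
  define b where "b = Im v"
  have h1: "a * x1 + b * y1 = 0" "a * x2 + b * y2 = 0" "x1 * x2 + y1 * y2 = 0"
    using assms(1-3) by (auto simp: inner_complex_def a_def b_def x1_def x2_def y1_def y2_def)
  have n1: "x1^2 + y1^2 > 0" using assms(4) by (simp add: x1_def y1_def complex_eq_iff sum_power2_gt_zero_iff)
  have n2: "x2^2 + y2^2 > 0" using assms(5) by (simp add: x2_def y2_def complex_eq_iff sum_power2_gt_zero_iff)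
  have "(x1 * y2 - y1 * x2)^2 = (x1^2 + y1^2) * (x2^2 + y2^2)" using h1(3) by algebra
  then have det: "x1 * y2 - y1 * x2 \<noteq> 0" using n1 n2 by auto
  have "a * (x1 * y2 - y1 * x2) = 0" using h1 by algebra
  then have "a = 0" using det by simp
  moreover have "b * (x1 * y2 - y1 * x2) = 0" using h1 by algebra
  then have "b = 0" using det by simp
  ultimately show ?thesis by (simp add: a_def b_def complex_eq_iff)
qed

lemma in_seg: "0 \<le> t \<Longrightarrow> t \<le> 1 \<Longrightarrow> (1 - t) *\<^sub>R a + t *\<^sub>R b \<in> closed_segment a b"
  by (auto simp: in_segment)

lemma Ylem:
  fixes A B C D M M' :: complex
  assumes AC: "A \<noteq> C" and BD: "B \<noteq> D" and orth: "(C - A) \<bullet> (D - B) = 0"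
    and d1: "closed_segment A B \<inter> closed_segment C D = {}"
    and d2: "closed_segment B C \<inter> closed_segment D A = {}"
    and M: "M \<in> closed_segment A B" and M': "M' \<in> closed_segment C D"
  shows "\<exists>Y. (Y \<in> closed_segment B C \<or> Y \<in> closed_segment D A) \<and> (M - Y) \<bullet> (M' - Y) \<le> 0"
proof -
  obtain t where t: "0 \<le> t" "t \<le> 1" "M = (1 - t) *\<^sub>R A + t *\<^sub>R B" using M by (auto simp: in_segment)
  obtain u where u: "0 \<le> u" "u \<le> 1" "M' = (1 - u) *\<^sub>R C + u *\<^sub>R D" using M' by (auto simp: in_segment)
  have orth': "C \<bullet> D - C \<bullet> B - A \<bullet> D + A \<bullet> B = 0"
    using orth by (simp add: inner_diff_left inner_diff_right inner_commute)
  define Y1 where "Y1 = (1 - (1 - t)) *\<^sub>R B + (1 - t) *\<^sub>R C"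
  define Y2 where "Y2 = (1 - (1 - u)) *\<^sub>R D + (1 - u) *\<^sub>R A"
  define Y3 where "Y3 = (1 - (1 - u)) *\<^sub>R B + (1 - u) *\<^sub>R C"
  define Y4 where "Y4 = (1 - (1 - t)) *\<^sub>R D + (1 - t) *\<^sub>R A"
  have Y1s: "Y1 \<in> closed_segment B C" unfolding Y1_def using t by (intro in_seg) auto
  have Y2s: "Y2 \<in> closed_segment D A" unfolding Y2_def using u by (intro in_seg) auto
  have Y3s: "Y3 \<in> closed_segment B C" unfolding Y3_def using u by (intro in_seg) auto
  have Y4s: "Y4 \<in> closed_segment D A" unfolding Y4_def using t by (intro in_seg) auto
  have o1: "(A - C) \<bullet> D = (A - C) \<bullet> B" and o2: "(C - A) \<bullet> D = (C - A) \<bullet> B"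
    and o3: "(D - B) \<bullet> C = (D - B) \<bullet> A" and o4: "(B - D) \<bullet> C = (B - D) \<bullet> A"
    using orth' by (simp_all add: inner_diff_left inner_diff_right inner_commute algebra_simps)
  have g1: "(M - Y1) \<bullet> (M' - Y1) = (1 - t) * (t - u) * ((A - C) \<bullet> (C - B))"
  proof -
    have e1: "M - Y1 = (1 - t) *\<^sub>R (A - C)" by (simp add: t Y1_def algebra_simps)
    have e2: "M' - Y1 = (t - u) *\<^sub>R C + u *\<^sub>R D - t *\<^sub>R B" by (simp add: u Y1_def algebra_simps)
    have "(M - Y1) \<bullet> (M' - Y1) = (1 - t) * ((t - u) * ((A - C) \<bullet> C) + u * ((A - C) \<bullet> D) - t * ((A - C) \<bullet> B))"
      unfolding e1 e2 by (simp add: inner_scaleR_left inner_add_right inner_diff_right inner_scaleR_right algebra_simps)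
    also have "\<dots> = (1 - t) * (t - u) * ((A - C) \<bullet> (C - B))"
      unfolding o1 by (simp add: inner_diff_right algebra_simps)
    finally show ?thesis .
  qed
  have g2: "(M - Y2) \<bullet> (M' - Y2) = (1 - u) * (t - u) * ((C - A) \<bullet> (B - A))"
  proof -
    have e1: "M' - Y2 = (1 - u) *\<^sub>R (C - A)" by (simp add: u Y2_def algebra_simps)
    have e2: "M - Y2 = (u - t) *\<^sub>R A + t *\<^sub>R B - u *\<^sub>R D" by (simp add: t Y2_def algebra_simps)
    have "(M - Y2) \<bullet> (M' - Y2) = (M' - Y2) \<bullet> (M - Y2)" by (rule inner_commute)
    also have "\<dots> = (1 - u) * ((u - t) * ((C - A) \<bullet> A) + t * ((C - A) \<bullet> B) - u * ((C - A) \<bullet> D))"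
      unfolding e1 e2 by (simp add: inner_scaleR_left inner_add_right inner_diff_right inner_scaleR_right algebra_simps)
    also have "\<dots> = (1 - u) * (t - u) * ((C - A) \<bullet> (B - A))"
      unfolding o2 by (simp add: inner_diff_right algebra_simps)
    finally show ?thesis .
  qed
  have g3: "(M - Y3) \<bullet> (M' - Y3) = u * (t - u) * ((D - B) \<bullet> (B - A))"
  proof -
    have e1: "M' - Y3 = u *\<^sub>R (D - B)" by (simp add: u Y3_def algebra_simps)
    have e2: "M - Y3 = (1 - t) *\<^sub>R A + (t - u) *\<^sub>R B - (1 - u) *\<^sub>R C" by (simp add: t Y3_def algebra_simps)
    have "(M - Y3) \<bullet> (M' - Y3) = (M' - Y3) \<bullet> (M - Y3)" by (rule inner_commute)
    also have "\<dots> = u * ((1 - t) * ((D - B) \<bullet> A) + (t - u) * ((D - B) \<bullet> B) - (1 - u) * ((D - B) \<bullet> C))"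
      unfolding e1 e2 by (simp add: inner_scaleR_left inner_add_right inner_diff_right inner_scaleR_right algebra_simps)
    also have "\<dots> = u * (t - u) * ((D - B) \<bullet> (B - A))"
      unfolding o3 by (simp add: inner_diff_right algebra_simps)
    finally show ?thesis .
  qed
  have g4: "(M - Y4) \<bullet> (M' - Y4) = t * (t - u) * ((D - B) \<bullet> (D - A))"
  proof -
    have e1: "M - Y4 = t *\<^sub>R (B - D)" by (simp add: t Y4_def algebra_simps)
    have e2: "M' - Y4 = (1 - u) *\<^sub>R C - (1 - t) *\<^sub>R A + (u - t) *\<^sub>R D" by (simp add: u Y4_def algebra_simps)
    have "(M - Y4) \<bullet> (M' - Y4) = t * ((1 - u) * ((B - D) \<bullet> C) - (1 - t) * ((B - D) \<bullet> A) + (u - t) * ((B - D) \<bullet> D))"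
      unfolding e1 e2 by (simp add: inner_scaleR_left inner_add_right inner_diff_right inner_scaleR_right algebra_simps)
    also have "\<dots> = t * (t - u) * ((D - B) \<bullet> (D - A))"
      unfolding o4 by (simp add: inner_diff_right inner_diff_left inner_commute algebra_simps)
    finally show ?thesis .
  qed
  have P1: ?thesis if p1: "(C - A) \<bullet> (C - B) \<ge> 0" and p2: "(C - A) \<bullet> (B - A) \<ge> 0"
  proof (cases "u \<le> t")
    case True
    have "(A - C) \<bullet> (C - B) \<le> 0" using p1 by (simp add: inner_diff_left inner_diff_right)
    moreover have "(1 - t) * (t - u) \<ge> 0" using True t by simp
    ultimately have "(M - Y1) \<bullet> (M' - Y1) \<le> 0" unfolding g1 by (simp add: mult_nonneg_nonpos)
    then show ?thesis using Y1s by blast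
  next
    case False
    have "(1 - u) * (t - u) \<le> 0" using False u by (simp add: mult_nonneg_nonpos)
    then have "(M - Y2) \<bullet> (M' - Y2) \<le> 0" unfolding g2 using p2 by (simp add: mult_nonpos_nonneg)
    then show ?thesis using Y2s by blast
  qed
  have P2: ?thesis if p1: "(D - B) \<bullet> (A - B) \<ge> 0" and p2: "(D - B) \<bullet> (D - A) \<ge> 0"
  proof (cases "u \<le> t")
    case True
    have "(D - B) \<bullet> (B - A) \<le> 0" using p1 by (simp add: inner_diff_left inner_diff_right)
    moreover have "u * (t - u) \<ge> 0" using True u by simp
    ultimately have "(M - Y3) \<bullet> (M' - Y3) \<le> 0" unfolding g3 by (simp add: mult_nonneg_nonpos)
    then show ?thesis using Y3s by blast
  next
    case False
    have "t * (t - u) \<le> 0" using False t by (simp add: mult_nonneg_nonpos)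
    then have "(M - Y4) \<bullet> (M' - Y4) \<le> 0" unfolding g4 using p2 by (simp add: mult_nonpos_nonneg)
    then show ?thesis using Y4s by blast
  qed
  show ?thesis
  proof (rule ccontr)
    assume nt: "\<not> ?thesis"
    then have nP1: "\<not> ((C - A) \<bullet> (C - B) \<ge> 0 \<and> (C - A) \<bullet> (B - A) \<ge> 0)"
      and nP2: "\<not> ((D - B) \<bullet> (A - B) \<ge> 0 \<and> (D - B) \<bullet> (D - A) \<ge> 0)" using P1 P2 by blast+
    define E1 where "E1 = C - A"
    define E2 where "E2 = D - B"
    have E1n: "E1 \<noteq> 0" and E2n: "E2 \<noteq> 0" using AC BD by (auto simp: E1_def E2_def)
    have E1p: "E1 \<bullet> E1 > 0" and E2p: "E2 \<bullet> E2 > 0" using E1n E2n by auto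
    have o12: "E1 \<bullet> E2 = 0" using orth by (simp add: E1_def E2_def)
    define l where "l = ((B - A) \<bullet> E1) / (E1 \<bullet> E1)"
    define Oc where "Oc = A + l *\<^sub>R E1"
    define m where "m = ((Oc - B) \<bullet> E2) / (E2 \<bullet> E2)"
    have lE: "l * (E1 \<bullet> E1) = (B - A) \<bullet> E1" using E1p by (simp add: l_def)
    have mE: "m * (E2 \<bullet> E2) = (Oc - B) \<bullet> E2" using E2p by (simp add: m_def)
    have "Oc - B - m *\<^sub>R E2 = 0"
    proof (rule orth2[OF _ _ o12 E1n E2n])
      show "(Oc - B - m *\<^sub>R E2) \<bullet> E1 = 0"
        using lE o12 by (simp add: Oc_def inner_diff_left inner_add_left inner_commute algebra_simps)
      show "(Oc - B - m *\<^sub>R E2) \<bullet> E2 = 0"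
        using mE by (simp add: inner_diff_left)
    qed
    then have hB: "B = Oc - m *\<^sub>R E2" by (simp add: algebra_simps)
    have hA: "A = Oc - l *\<^sub>R E1" by (simp add: Oc_def)
    have hC: "C = Oc + (1 - l) *\<^sub>R E1" by (simp add: Oc_def E1_def algebra_simps)
    have hD: "D = Oc + (1 - m) *\<^sub>R E2" using hB by (simp add: E2_def algebra_simps)
    have i1: "(C - A) \<bullet> (C - B) = (1 - l) * (E1 \<bullet> E1)"
    proof -
      have "C - B = (1 - l) *\<^sub>R E1 + m *\<^sub>R E2" using hC hB by (simp add: algebra_simps)
      then show ?thesis using o12 by (simp add: E1_def[symmetric] inner_add_right)
    qed
    have i2: "(C - A) \<bullet> (B - A) = l * (E1 \<bullet> E1)" using lE by (simp add: E1_def inner_commute)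
    have i3: "(D - B) \<bullet> (A - B) = m * (E2 \<bullet> E2)"
    proof -
      have "A - B = m *\<^sub>R E2 - l *\<^sub>R E1" using hA hB by (simp add: algebra_simps)
      then show ?thesis using o12 by (simp add: E2_def[symmetric] inner_diff_right inner_commute)
    qed
    have i4: "(D - B) \<bullet> (D - A) = (1 - m) * (E2 \<bullet> E2)"
    proof -
      have "D - A = (1 - m) *\<^sub>R E2 + l *\<^sub>R E1" using hA hD by (simp add: algebra_simps)
      then show ?thesis using o12 by (simp add: E2_def[symmetric] inner_add_right inner_commute)
    qed
    have lc: "l < 0 \<or> l > 1"
    proof (rule ccontr)
      assume "\<not> ?thesis"
      then have "0 \<le> l" "l \<le> 1" by auto
      then have "(C - A) \<bullet> (C - B) \<ge> 0" "(C - A) \<bullet> (B - A) \<ge> 0" using E1p unfolding i1 i2 by auto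
      then show False using nP1 by blast
    qed
    have mc: "m < 0 \<or> m > 1"
    proof (rule ccontr)
      assume "\<not> ?thesis"
      then have "0 \<le> m" "m \<le> 1" by auto
      then have "(D - B) \<bullet> (A - B) \<ge> 0" "(D - B) \<bullet> (D - A) \<ge> 0" using E2p unfolding i3 i4 by auto
      then show False using nP2 by blast
    qed
    have X1: "(1 - t') *\<^sub>R A + t' *\<^sub>R B = (1 - u') *\<^sub>R C + u' *\<^sub>R D"
      if h1: "- (1 - t') * l = (1 - u') * (1 - l)" and h2: "- t' * m = u' * (1 - m)" for t' u'
    proof -
      have "(1 - t') *\<^sub>R A + t' *\<^sub>R B = Oc + (- (1 - t') * l) *\<^sub>R E1 + (- t' * m) *\<^sub>R E2"
        unfolding hA hB by (simp add: algebra_simps)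
      also have "\<dots> = Oc + ((1 - u') * (1 - l)) *\<^sub>R E1 + (u' * (1 - m)) *\<^sub>R E2" unfolding h1 h2 ..
      also have "\<dots> = (1 - u') *\<^sub>R C + u' *\<^sub>R D" unfolding hC hD by (simp add: algebra_simps)
      finally show ?thesis .
    qed
    have X2: "(1 - t') *\<^sub>R B + t' *\<^sub>R C = (1 - u') *\<^sub>R D + u' *\<^sub>R A"
      if h1: "t' * (1 - l) = - u' * l" and h2: "- (1 - t') * m = (1 - u') * (1 - m)" for t' u'
    proof -
      have "(1 - t') *\<^sub>R B + t' *\<^sub>R C = Oc + (t' * (1 - l)) *\<^sub>R E1 + (- (1 - t') * m) *\<^sub>R E2"
        unfolding hB hC by (simp add: algebra_simps)
      also have "\<dots> = Oc + (- u' * l) *\<^sub>R E1 + ((1 - u') * (1 - m)) *\<^sub>R E2" unfolding h1 h2 ..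
      also have "\<dots> = (1 - u') *\<^sub>R D + u' *\<^sub>R A" unfolding hA hD by (simp add: algebra_simps)
      finally show ?thesis .
    qed
    show False
    proof (cases "(l < 0 \<and> m > 1) \<or> (l > 1 \<and> m < 0)")
      case True
      define t' where "t' = (1 - m) / (l - m)"
      define u' where "u' = m / (m - l)"
      have lm: "l - m \<noteq> 0" "m - l \<noteq> 0" using True by auto
      have e1: "- (1 - t') * l = (1 - u') * (1 - l)" using lm by (simp add: t'_def u'_def field_simps; simp add: algebra_simps)
      have e2: "- t' * m = u' * (1 - m)" using lm by (simp add: t'_def u'_def field_simps; simp add: algebra_simps)
      have b: "0 \<le> t'" "t' \<le> 1" "0 \<le> u'" "u' \<le> 1" using True
        by (auto simp: t'_def u'_def divide_simps)
      have "(1 - t') *\<^sub>R A + t' *\<^sub>R B \<in> closed_segment A B" using b by (intro in_seg)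
      moreover have "(1 - t') *\<^sub>R A + t' *\<^sub>R B \<in> closed_segment C D" unfolding X1[OF e1 e2] using b by (intro in_seg)
      ultimately show False using d1 by blast
    next
      case False
      then have F: "(l < 0 \<and> m < 0) \<or> (l > 1 \<and> m > 1)" using lc mc by auto
      define t' where "t' = l / (l + m - 1)"
      define u' where "u' = (l - 1) / (l + m - 1)"
      have lm: "l + m - 1 \<noteq> 0" using F by auto
      have e1: "t' * (1 - l) = - u' * l" using lm by (simp add: t'_def u'_def field_simps; simp add: algebra_simps)
      have e2: "- (1 - t') * m = (1 - u') * (1 - m)" using lm by (simp add: t'_def u'_def field_simps; simp add: algebra_simps)
      have b: "0 \<le> t'" "t' \<le> 1" "0 \<le> u'" "u' \<le> 1" using F
        by (auto simp: t'_def u'_def divide_simps)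
      have "(1 - t') *\<^sub>R B + t' *\<^sub>R C \<in> closed_segment B C" using b by (intro in_seg)
      moreover have "(1 - t') *\<^sub>R B + t' *\<^sub>R C \<in> closed_segment D A" unfolding X2[OF e1 e2] using b by (intro in_seg)
      ultimately show False using d2 by blast
    qed
  qed
qed

lemma seg_dist: "(x::complex) \<in> closed_segment a b \<Longrightarrow> dist a x + dist x b = dist a b"
  using between[of a b x] by (simp add: between_mem_segment)

lemma lp:
  fixes U V :: complex
  assumes "U \<noteq> V" "0 \<le> x" "x \<le> dist U V"
  shows "linepath U V (x / dist U V) \<in> closed_segment U V"
    "dist (linepath U V (x / dist U V)) U = x"
    "dist (linepath U V (x / dist U V)) V = dist U V - x"
proof -
  have L: "dist U V > 0" using assms by simp
  have t: "0 \<le> x / dist U V" "x / dist U V \<le> 1" using assms L by (auto simp: divide_simps)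
  show "linepath U V (x / dist U V) \<in> closed_segment U V"
    unfolding linepath_def using t by (intro in_seg)
  have e1: "linepath U V (x / dist U V) - U = (x / dist U V) *\<^sub>R (V - U)"
    by (simp add: linepath_def algebra_simps)
  show d1: "dist (linepath U V (x / dist U V)) U = x"
  proof -
    have "dist (linepath U V (x / dist U V)) U = \<bar>x / dist U V\<bar> * norm (V - U)"
      by (simp only: dist_norm[of "linepath U V (x / dist U V)" U] e1 norm_scaleR)
    also have "norm (V - U) = dist U V" by (simp add: dist_norm norm_minus_commute)
    finally show ?thesis using L assms(2) by simp
  qed
  have e2: "linepath U V (x / dist U V) - V = (1 - x / dist U V) *\<^sub>R (U - V)"
    by (simp add: linepath_def algebra_simps)
  show "dist (linepath U V (x / dist U V)) V = dist U V - x"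
  proof -
    have "dist (linepath U V (x / dist U V)) V = \<bar>1 - x / dist U V\<bar> * norm (U - V)"
      by (simp only: dist_norm[of "linepath U V (x / dist U V)" V] e2 norm_scaleR)
    also have "norm (U - V) = dist U V" by (simp add: dist_norm)
    finally show ?thesis using L t by (simp add: field_simps)
  qed
qed

lemma lp_same:
  fixes U V :: complex
  assumes "U \<noteq> V"
  shows "dist (linepath U V (x / dist U V)) (linepath U V (y / dist U V)) = \<bar>x - y\<bar>"
proof -
  have L: "dist U V > 0" using assms by simp
  have "linepath U V (x / dist U V) - linepath U V (y / dist U V) = ((x - y) / dist U V) *\<^sub>R (V - U)"
    by (simp add: linepath_def algebra_simps diff_divide_distrib)
  then have "dist (linepath U V (x / dist U V)) (linepath U V (y / dist U V)) = \<bar>(x - y) / dist U V\<bar> * norm (V - U)"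
    by (simp add: dist_norm)
  also have "norm (V - U) = dist U V" by (simp add: dist_norm norm_minus_commute)
  finally show ?thesis using L by simp
qed

lemma obtuse_dist:
  fixes M M' Y :: complex
  assumes "(M - Y) \<bullet> (M' - Y) \<le> 0"
  shows "dist M Y \<le> dist M M'" "dist Y M' \<le> dist M M'"
proof -
  have "(dist M M')^2 = (M - Y - (M' - Y)) \<bullet> (M - Y - (M' - Y))"
    by (simp add: dist_norm power2_norm_eq_inner)
  also have "\<dots> = (M - Y) \<bullet> (M - Y) + (M' - Y) \<bullet> (M' - Y) - 2 * ((M - Y) \<bullet> (M' - Y))"
    by (simp add: inner_diff_left inner_diff_right inner_commute)
  moreover have "(Y - M') \<bullet> (Y - M') = (M' - Y) \<bullet> (M' - Y)"
    by (simp add: inner_diff_left inner_diff_right inner_commute)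
  ultimately have e: "(dist M M')^2 = (dist M Y)^2 + (dist Y M')^2 - 2 * ((M - Y) \<bullet> (M' - Y))"
    by (simp add: dist_norm power2_norm_eq_inner)
  have "(dist M Y)^2 \<le> (dist M M')^2" using e assms zero_le_power2[of "dist Y M'"] by linarith
  then show "dist M Y \<le> dist M M'" by (rule power2_le_imp_le) simp
  have "(dist Y M')^2 \<le> (dist M M')^2" using e assms zero_le_power2[of "dist M Y"] by linarith
  then show "dist Y M' \<le> dist M M'" by (rule power2_le_imp_le) simp
qed

lemma arith0: "0 \<le> (k::real) \<Longrightarrow> k \<le> 1 \<Longrightarrow> 0 \<le> S \<Longrightarrow> D = S \<Longrightarrow> k / 4 * S \<le> D"
proof -
  assume a: "0 \<le> k" "k \<le> 1" "0 \<le> S" "D = S"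
  have "k * S \<le> 1 * S" using a by (intro mult_right_mono) auto
  then show ?thesis using a by simp
qed

lemma arith1: "0 \<le> (k::real) \<Longrightarrow> k / 2 * S1 \<le> D \<Longrightarrow> S1 = S \<Longrightarrow> 0 \<le> S \<Longrightarrow> k / 4 * S \<le> D"
proof -
  assume a: "0 \<le> k" "k / 2 * S1 \<le> D" "S1 = S" "0 \<le> S"
  have "k / 4 * S \<le> k / 2 * S" using a by (intro mult_right_mono) auto
  moreover have "k / 2 * S \<le> D" using a(2,3) by simp
  ultimately show ?thesis by linarith
qed

lemma av: "(x::real) \<le> p \<Longrightarrow> y \<le> q \<Longrightarrow> p \<le> r \<Longrightarrow> q \<le> r \<Longrightarrow> z = (x + y) / 2 \<Longrightarrow> z \<le> r"
  by simp

lemma arith2: "0 \<le> (k::real) \<Longrightarrow> k / 2 * S1 \<le> D1 \<Longrightarrow> k / 2 * S2 \<le> D2 \<Longrightarrow> D1 \<le> D \<Longrightarrow> D2 \<le> D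
  \<Longrightarrow> S1 + S2 = S \<Longrightarrow> k / 4 * S \<le> D"
proof -
  assume a: "0 \<le> k" "k / 2 * S1 \<le> D1" "k / 2 * S2 \<le> D2" "D1 \<le> D" "D2 \<le> D" "S1 + S2 = S"
  show ?thesis
    by (rule av[OF a(2) a(3) a(4) a(5)]) (subst a(6)[symmetric], simp add: algebra_simps)
qed

lemma main_le:
  fixes A B C D :: complex and \<eta> s s' :: real
  assumes dst: "A \<noteq> B" "B \<noteq> C" "C \<noteq> D" "D \<noteq> A"
    and AC: "A \<noteq> C" and BD: "B \<noteq> D"
    and orth: "(C - A) \<bullet> (D - B) = 0"
    and dj1: "closed_segment A B \<inter> closed_segment C D = {}"
    and dj2: "closed_segment B C \<inter> closed_segment D A = {}"
    and eta_pos: "\<eta> > 0"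
    and angA: "\<eta> \<le> vertex_angle D A B" "vertex_angle D A B \<le> 2 * pi - \<eta>"
    and angB: "\<eta> \<le> vertex_angle A B C" "vertex_angle A B C \<le> 2 * pi - \<eta>"
    and angC: "\<eta> \<le> vertex_angle B C D" "vertex_angle B C D \<le> 2 * pi - \<eta>"
    and angD: "\<eta> \<le> vertex_angle C D A" "vertex_angle C D A \<le> 2 * pi - \<eta>"
    and sb: "0 \<le> s" "s' \<le> perimeter4 A B C D"
    and le: "s \<le> s'"
  shows "sin \<eta> / 4 * bdist A B C D s s' \<le> dist (bpoint A B C D s) (bpoint A B C D s')"
proof -
  let ?a = "dist A B" and ?b = "dist B C" and ?c = "dist C D" and ?d = "dist D A"
  define k where "k = sin \<eta>"
  define M where "M = bpoint A B C D s"
  define M' where "M' = bpoint A B C D s'"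
  have per: "perimeter4 A B C D = ?a + ?b + ?c + ?d" by (simp add: perimeter4_def)
  have epi: "\<eta> \<le> pi" using angA by linarith
  have k0: "0 \<le> k" using epi eta_pos by (simp add: k_def sin_ge_zero)
  have k1: "k \<le> 1" by (simp add: k_def)
  have bd1: "bdist A B C D s s' \<le> s' - s" using le by (simp add: bdist_def)
  have bd2: "bdist A B C D s s' \<le> perimeter4 A B C D - (s' - s)" using le by (simp add: bdist_def)
  have fin1: "k / 4 * (s' - s) \<le> dist M M' \<Longrightarrow> ?thesis"
  proof -
    assume h: "k / 4 * (s' - s) \<le> dist M M'"
    have "k / 4 * bdist A B C D s s' \<le> k / 4 * (s' - s)" using bd1 k0 by (intro mult_left_mono) auto
    then show ?thesis using h by (simp add: k_def M_def M'_def)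
  qed
  have fin2: "k / 4 * (perimeter4 A B C D - (s' - s)) \<le> dist M M' \<Longrightarrow> ?thesis"
  proof -
    assume h: "k / 4 * (perimeter4 A B C D - (s' - s)) \<le> dist M M'"
    have "k / 4 * bdist A B C D s s' \<le> k / 4 * (perimeter4 A B C D - (s' - s))" using bd2 k0 by (intro mult_left_mono) auto
    then show ?thesis using h by (simp add: k_def M_def M'_def)
  qed
  have adjA: "k / 2 * (dist X A + dist A Y) \<le> dist X Y" if "X \<in> closed_segment A D" "Y \<in> closed_segment A B" for X Y
    unfolding k_def using adj[OF dst(4) dst(1)[symmetric] eta_pos angA that] .
  have adjB: "k / 2 * (dist X B + dist B Y) \<le> dist X Y" if "X \<in> closed_segment B A" "Y \<in> closed_segment B C" for X Y
    unfolding k_def using adj[OF dst(1) dst(2)[symmetric] eta_pos angB that] .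
  have adjC: "k / 2 * (dist X C + dist C Y) \<le> dist X Y" if "X \<in> closed_segment C B" "Y \<in> closed_segment C D" for X Y
    unfolding k_def using adj[OF dst(2) dst(3)[symmetric] eta_pos angC that] .
  have adjD: "k / 2 * (dist X D + dist D Y) \<le> dist X Y" if "X \<in> closed_segment D C" "Y \<in> closed_segment D A" for X Y
    unfolding k_def using adj[OF dst(3) dst(4)[symmetric] eta_pos angD that] .
  have orth2': "(D - B) \<bullet> (A - C) = 0" using orth by (simp add: inner_commute inner_diff_left inner_diff_right algebra_simps)
  have dj1': "closed_segment C D \<inter> closed_segment A B = {}" using dj1 by blast
  have sb': "s' \<le> ?a + ?b + ?c + ?d" using sb per by simp
  have dp: "0 < ?a" "0 < ?b" "0 < ?c" "0 < ?d" using dst by auto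
  note sb = sb sb' le dp
    consider (c1) "s \<le> ?a" | (c2) "?a < s" "s \<le> ?a + ?b" | (c3) "?a + ?b < s" "s \<le> ?a + ?b + ?c" | (c4) "?a + ?b + ?c < s" by linarith
    then show ?thesis
  proof cases
      case c1
      note scc = c1
      consider (d1) "s' \<le> ?a" | (d2) "?a < s'" "s' \<le> ?a + ?b" | (d3) "?a + ?b < s'" "s' \<le> ?a + ?b + ?c" | (d4) "?a + ?b + ?c < s'" by linarith
      then show ?thesis
      proof cases
        case d1
        note s2cc = d1
        have scx: "0 \<le> s" "s \<le> dist A B" using scc sb by auto
        have sce: "M = linepath A B ((s) / dist A B)" unfolding M_def using scc dp by (simp add: bpoint_def Let_def )
        note scf = lp[OF _ scx, folded sce]
        have scs: "M \<in> closed_segment A B" "dist M A = s" "dist M B = dist A B - (s)" using scf dst by auto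
        have s2cx: "0 \<le> s'" "s' \<le> dist A B" using s2cc sb by auto
        have s2ce: "M' = linepath A B ((s') / dist A B)" unfolding M'_def using s2cc dp by (simp add: bpoint_def Let_def )
        note s2cf = lp[OF _ s2cx, folded s2ce]
        have s2cs: "M' \<in> closed_segment A B" "dist M' A = s'" "dist M' B = dist A B - (s')" using s2cf dst by auto
        have "dist M M' = \<bar>(s) - (s')\<bar>" unfolding sce s2ce by (rule lp_same) (use dst in auto)
        then have "dist M M' = s' - s" using le by simp
        then show ?thesis by (intro fin1 arith0[OF k0 k1]) (use le in auto)
      next
        case d2
        note s2cc = d2
        have scx: "0 \<le> s" "s \<le> dist A B" using scc sb by auto
        have sce: "M = linepath A B ((s) / dist A B)" unfolding M_def using scc dp by (simp add: bpoint_def Let_def )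
        note scf = lp[OF _ scx, folded sce]
        have scs: "M \<in> closed_segment A B" "dist M A = s" "dist M B = dist A B - (s)" using scf dst by auto
        have s2cn: "\<not> s' \<le> ?a" using s2cc dp by linarith+
        have s2cx: "0 \<le> s' - ?a" "s' - ?a \<le> dist B C" using s2cc sb by auto
        have s2ce: "M' = linepath B C ((s' - ?a) / dist B C)" unfolding M'_def using s2cc dp by (simp add: bpoint_def Let_def s2cn)
        note s2cf = lp[OF _ s2cx, folded s2ce]
        have s2cs: "M' \<in> closed_segment B C" "dist M' B = s' - ?a" "dist M' C = dist B C - (s' - ?a)" using s2cf dst by auto
        have h: "k / 2 * (dist M B + dist B M') \<le> dist M M'" using scs s2cs by (intro adjB) (auto simp: closed_segment_commute)
        show ?thesis by (rule fin1, rule arith1[OF k0 h]) (use scs s2cs sb in \<open>auto simp: dist_commute\<close>)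
      next
        case d3
        note s2cc = d3
        have scx: "0 \<le> s" "s \<le> dist A B" using scc sb by auto
        have sce: "M = linepath A B ((s) / dist A B)" unfolding M_def using scc dp by (simp add: bpoint_def Let_def )
        note scf = lp[OF _ scx, folded sce]
        have scs: "M \<in> closed_segment A B" "dist M A = s" "dist M B = dist A B - (s)" using scf dst by auto
        have s2cn: "\<not> s' \<le> ?a" "\<not> s' \<le> ?a + ?b" using s2cc dp by linarith+
        have s2cx: "0 \<le> s' - ?a - ?b" "s' - ?a - ?b \<le> dist C D" using s2cc sb by auto
        have s2ce: "M' = linepath C D ((s' - ?a - ?b) / dist C D)" unfolding M'_def using s2cc dp by (simp add: bpoint_def Let_def s2cn)
        note s2cf = lp[OF _ s2cx, folded s2ce]
        have s2cs: "M' \<in> closed_segment C D" "dist M' C = s' - ?a - ?b" "dist M' D = dist C D - (s' - ?a - ?b)" using s2cf dst by auto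
        obtain Y where Y: "Y \<in> closed_segment B C \<or> Y \<in> closed_segment D A" "(M - Y) \<bullet> (M' - Y) \<le> 0"
          using Ylem[OF AC BD orth dj1 dj2 scs(1) s2cs(1)] by blast
        note od = obtuse_dist[OF Y(2)]
        from Y(1) show ?thesis
        proof
          assume Yb: "Y \<in> closed_segment B C"
          have h1: "k / 2 * (dist M B + dist B Y) \<le> dist M Y" using scs Yb by (intro adjB) (auto simp: closed_segment_commute)
          have h2: "k / 2 * (dist Y C + dist C M') \<le> dist Y M'" using s2cs Yb by (intro adjC) (auto simp: closed_segment_commute)
          have sd: "dist B Y + dist Y C = dist B C" using Yb by (rule seg_dist)
          show ?thesis by (rule fin1, rule arith2[OF k0 h1 h2 od]) (use scs s2cs sb sd in \<open>auto simp: dist_commute\<close>)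
        next
          assume Yb: "Y \<in> closed_segment D A"
          have h1: "k / 2 * (dist Y A + dist A M) \<le> dist Y M" using scs Yb by (intro adjA) (auto simp: closed_segment_commute)
          have h2: "k / 2 * (dist M' D + dist D Y) \<le> dist M' Y" using s2cs Yb by (intro adjD) (auto simp: closed_segment_commute)
          have sd: "dist D Y + dist Y A = dist D A" using Yb by (rule seg_dist)
          show ?thesis by (rule fin2, rule arith2[OF k0 h1[unfolded dist_commute[of Y M]] h2[unfolded dist_commute[of M' Y]] od]) (use scs s2cs sb sd in \<open>auto simp: dist_commute perimeter4_def\<close>)
        qed
      next
        case d4
        note s2cc = d4
        have scx: "0 \<le> s" "s \<le> dist A B" using scc sb by auto
        have sce: "M = linepath A B ((s) / dist A B)" unfolding M_def using scc dp by (simp add: bpoint_def Let_def )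
        note scf = lp[OF _ scx, folded sce]
        have scs: "M \<in> closed_segment A B" "dist M A = s" "dist M B = dist A B - (s)" using scf dst by auto
        have s2cn: "\<not> s' \<le> ?a" "\<not> s' \<le> ?a + ?b" "\<not> s' \<le> ?a + ?b + ?c" using s2cc dp by linarith+
        have s2cx: "0 \<le> s' - ?a - ?b - ?c" "s' - ?a - ?b - ?c \<le> dist D A" using s2cc sb by auto
        have s2ce: "M' = linepath D A ((s' - ?a - ?b - ?c) / dist D A)" unfolding M'_def using s2cc dp by (simp add: bpoint_def Let_def s2cn)
        note s2cf = lp[OF _ s2cx, folded s2ce]
        have s2cs: "M' \<in> closed_segment D A" "dist M' D = s' - ?a - ?b - ?c" "dist M' A = dist D A - (s' - ?a - ?b - ?c)" using s2cf dst by auto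
        have h: "k / 2 * (dist M' A + dist A M) \<le> dist M' M" using scs s2cs by (intro adjA) (auto simp: closed_segment_commute)
        show ?thesis by (rule fin2, rule arith1[OF k0 h[unfolded dist_commute[of M' M]]]) (use scs s2cs sb in \<open>auto simp: dist_commute perimeter4_def\<close>)
      qed
    next
      case c2
      note scc = c2
      consider (d1) "s' \<le> ?a" | (d2) "?a < s'" "s' \<le> ?a + ?b" | (d3) "?a + ?b < s'" "s' \<le> ?a + ?b + ?c" | (d4) "?a + ?b + ?c < s'" by linarith
      then show ?thesis
      proof cases
        case d1
        note s2cc = d1
        then show ?thesis using scc s2cc le dp by linarith
      next
        case d2
        note s2cc = d2
        have scn: "\<not> s \<le> ?a" using scc dp by linarith+
        have scx: "0 \<le> s - ?a" "s - ?a \<le> dist B C" using scc sb by auto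
        have sce: "M = linepath B C ((s - ?a) / dist B C)" unfolding M_def using scc dp by (simp add: bpoint_def Let_def scn)
        note scf = lp[OF _ scx, folded sce]
        have scs: "M \<in> closed_segment B C" "dist M B = s - ?a" "dist M C = dist B C - (s - ?a)" using scf dst by auto
        have s2cn: "\<not> s' \<le> ?a" using s2cc dp by linarith+
        have s2cx: "0 \<le> s' - ?a" "s' - ?a \<le> dist B C" using s2cc sb by auto
        have s2ce: "M' = linepath B C ((s' - ?a) / dist B C)" unfolding M'_def using s2cc dp by (simp add: bpoint_def Let_def s2cn)
        note s2cf = lp[OF _ s2cx, folded s2ce]
        have s2cs: "M' \<in> closed_segment B C" "dist M' B = s' - ?a" "dist M' C = dist B C - (s' - ?a)" using s2cf dst by auto
        have "dist M M' = \<bar>(s - ?a) - (s' - ?a)\<bar>" unfolding sce s2ce by (rule lp_same) (use dst in auto)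
        then have "dist M M' = s' - s" using le by simp
        then show ?thesis by (intro fin1 arith0[OF k0 k1]) (use le in auto)
      next
        case d3
        note s2cc = d3
        have scn: "\<not> s \<le> ?a" using scc dp by linarith+
        have scx: "0 \<le> s - ?a" "s - ?a \<le> dist B C" using scc sb by auto
        have sce: "M = linepath B C ((s - ?a) / dist B C)" unfolding M_def using scc dp by (simp add: bpoint_def Let_def scn)
        note scf = lp[OF _ scx, folded sce]
        have scs: "M \<in> closed_segment B C" "dist M B = s - ?a" "dist M C = dist B C - (s - ?a)" using scf dst by auto
        have s2cn: "\<not> s' \<le> ?a" "\<not> s' \<le> ?a + ?b" using s2cc dp by linarith+
        have s2cx: "0 \<le> s' - ?a - ?b" "s' - ?a - ?b \<le> dist C D" using s2cc sb by auto
        have s2ce: "M' = linepath C D ((s' - ?a - ?b) / dist C D)" unfolding M'_def using s2cc dp by (simp add: bpoint_def Let_def s2cn)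
        note s2cf = lp[OF _ s2cx, folded s2ce]
        have s2cs: "M' \<in> closed_segment C D" "dist M' C = s' - ?a - ?b" "dist M' D = dist C D - (s' - ?a - ?b)" using s2cf dst by auto
        have h: "k / 2 * (dist M C + dist C M') \<le> dist M M'" using scs s2cs by (intro adjC) (auto simp: closed_segment_commute)
        show ?thesis by (rule fin1, rule arith1[OF k0 h]) (use scs s2cs sb in \<open>auto simp: dist_commute\<close>)
      next
        case d4
        note s2cc = d4
        have scn: "\<not> s \<le> ?a" using scc dp by linarith+
        have scx: "0 \<le> s - ?a" "s - ?a \<le> dist B C" using scc sb by auto
        have sce: "M = linepath B C ((s - ?a) / dist B C)" unfolding M_def using scc dp by (simp add: bpoint_def Let_def scn)
        note scf = lp[OF _ scx, folded sce]
        have scs: "M \<in> closed_segment B C" "dist M B = s - ?a" "dist M C = dist B C - (s - ?a)" using scf dst by auto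
        have s2cn: "\<not> s' \<le> ?a" "\<not> s' \<le> ?a + ?b" "\<not> s' \<le> ?a + ?b + ?c" using s2cc dp by linarith+
        have s2cx: "0 \<le> s' - ?a - ?b - ?c" "s' - ?a - ?b - ?c \<le> dist D A" using s2cc sb by auto
        have s2ce: "M' = linepath D A ((s' - ?a - ?b - ?c) / dist D A)" unfolding M'_def using s2cc dp by (simp add: bpoint_def Let_def s2cn)
        note s2cf = lp[OF _ s2cx, folded s2ce]
        have s2cs: "M' \<in> closed_segment D A" "dist M' D = s' - ?a - ?b - ?c" "dist M' A = dist D A - (s' - ?a - ?b - ?c)" using s2cf dst by auto
        obtain Y where Y: "Y \<in> closed_segment C D \<or> Y \<in> closed_segment A B" "(M - Y) \<bullet> (M' - Y) \<le> 0"
          using Ylem[OF BD AC[symmetric] orth2' dj2 dj1' scs(1) s2cs(1)] by blast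
        note od = obtuse_dist[OF Y(2)]
        from Y(1) show ?thesis
        proof
          assume Yb: "Y \<in> closed_segment C D"
          have h1: "k / 2 * (dist M C + dist C Y) \<le> dist M Y" using scs Yb by (intro adjC) (auto simp: closed_segment_commute)
          have h2: "k / 2 * (dist Y D + dist D M') \<le> dist Y M'" using s2cs Yb by (intro adjD) (auto simp: closed_segment_commute)
          have sd: "dist C Y + dist Y D = dist C D" using Yb by (rule seg_dist)
          show ?thesis by (rule fin1, rule arith2[OF k0 h1 h2 od]) (use scs s2cs sb sd in \<open>auto simp: dist_commute\<close>)
        next
          assume Yb: "Y \<in> closed_segment A B"
          have h1: "k / 2 * (dist Y B + dist B M) \<le> dist Y M" using scs Yb by (intro adjB) (auto simp: closed_segment_commute)
          have h2: "k / 2 * (dist M' A + dist A Y) \<le> dist M' Y" using s2cs Yb by (intro adjA) (auto simp: closed_segment_commute)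
          have sd: "dist A Y + dist Y B = dist A B" using Yb by (rule seg_dist)
          show ?thesis by (rule fin2, rule arith2[OF k0 h1[unfolded dist_commute[of Y M]] h2[unfolded dist_commute[of M' Y]] od]) (use scs s2cs sb sd in \<open>auto simp: dist_commute perimeter4_def\<close>)
        qed
      qed
    next
      case c3
      note scc = c3
      consider (d1) "s' \<le> ?a" | (d2) "?a < s'" "s' \<le> ?a + ?b" | (d3) "?a + ?b < s'" "s' \<le> ?a + ?b + ?c" | (d4) "?a + ?b + ?c < s'" by linarith
      then show ?thesis
      proof cases
        case d1
        note s2cc = d1
        then show ?thesis using scc s2cc le dp by linarith
      next
        case d2
        note s2cc = d2
        then show ?thesis using scc s2cc le dp by linarith
      next
        case d3
        note s2cc = d3
        have scn: "\<not> s \<le> ?a" "\<not> s \<le> ?a + ?b" using scc dp by linarith+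
        have scx: "0 \<le> s - ?a - ?b" "s - ?a - ?b \<le> dist C D" using scc sb by auto
        have sce: "M = linepath C D ((s - ?a - ?b) / dist C D)" unfolding M_def using scc dp by (simp add: bpoint_def Let_def scn)
        note scf = lp[OF _ scx, folded sce]
        have scs: "M \<in> closed_segment C D" "dist M C = s - ?a - ?b" "dist M D = dist C D - (s - ?a - ?b)" using scf dst by auto
        have s2cn: "\<not> s' \<le> ?a" "\<not> s' \<le> ?a + ?b" using s2cc dp by linarith+
        have s2cx: "0 \<le> s' - ?a - ?b" "s' - ?a - ?b \<le> dist C D" using s2cc sb by auto
        have s2ce: "M' = linepath C D ((s' - ?a - ?b) / dist C D)" unfolding M'_def using s2cc dp by (simp add: bpoint_def Let_def s2cn)
        note s2cf = lp[OF _ s2cx, folded s2ce]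
        have s2cs: "M' \<in> closed_segment C D" "dist M' C = s' - ?a - ?b" "dist M' D = dist C D - (s' - ?a - ?b)" using s2cf dst by auto
        have "dist M M' = \<bar>(s - ?a - ?b) - (s' - ?a - ?b)\<bar>" unfolding sce s2ce by (rule lp_same) (use dst in auto)
        then have "dist M M' = s' - s" using le by simp
        then show ?thesis by (intro fin1 arith0[OF k0 k1]) (use le in auto)
      next
        case d4
        note s2cc = d4
        have scn: "\<not> s \<le> ?a" "\<not> s \<le> ?a + ?b" using scc dp by linarith+
        have scx: "0 \<le> s - ?a - ?b" "s - ?a - ?b \<le> dist C D" using scc sb by auto
        have sce: "M = linepath C D ((s - ?a - ?b) / dist C D)" unfolding M_def using scc dp by (simp add: bpoint_def Let_def scn)
        note scf = lp[OF _ scx, folded sce]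
        have scs: "M \<in> closed_segment C D" "dist M C = s - ?a - ?b" "dist M D = dist C D - (s - ?a - ?b)" using scf dst by auto
        have s2cn: "\<not> s' \<le> ?a" "\<not> s' \<le> ?a + ?b" "\<not> s' \<le> ?a + ?b + ?c" using s2cc dp by linarith+
        have s2cx: "0 \<le> s' - ?a - ?b - ?c" "s' - ?a - ?b - ?c \<le> dist D A" using s2cc sb by auto
        have s2ce: "M' = linepath D A ((s' - ?a - ?b - ?c) / dist D A)" unfolding M'_def using s2cc dp by (simp add: bpoint_def Let_def s2cn)
        note s2cf = lp[OF _ s2cx, folded s2ce]
        have s2cs: "M' \<in> closed_segment D A" "dist M' D = s' - ?a - ?b - ?c" "dist M' A = dist D A - (s' - ?a - ?b - ?c)" using s2cf dst by auto
        have h: "k / 2 * (dist M D + dist D M') \<le> dist M M'" using scs s2cs by (intro adjD) (auto simp: closed_segment_commute)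
        show ?thesis by (rule fin1, rule arith1[OF k0 h]) (use scs s2cs sb in \<open>auto simp: dist_commute\<close>)
      qed
    next
      case c4
      note scc = c4
      consider (d1) "s' \<le> ?a" | (d2) "?a < s'" "s' \<le> ?a + ?b" | (d3) "?a + ?b < s'" "s' \<le> ?a + ?b + ?c" | (d4) "?a + ?b + ?c < s'" by linarith
      then show ?thesis
      proof cases
        case d1
        note s2cc = d1
        then show ?thesis using scc s2cc le dp by linarith
      next
        case d2
        note s2cc = d2
        then show ?thesis using scc s2cc le dp by linarith
      next
        case d3
        note s2cc = d3
        then show ?thesis using scc s2cc le dp by linarith
      next
        case d4
        note s2cc = d4
        have scn: "\<not> s \<le> ?a" "\<not> s \<le> ?a + ?b" "\<not> s \<le> ?a + ?b + ?c" using scc dp by linarith+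
        have scx: "0 \<le> s - ?a - ?b - ?c" "s - ?a - ?b - ?c \<le> dist D A" using scc sb by auto
        have sce: "M = linepath D A ((s - ?a - ?b - ?c) / dist D A)" unfolding M_def using scc dp by (simp add: bpoint_def Let_def scn)
        note scf = lp[OF _ scx, folded sce]
        have scs: "M \<in> closed_segment D A" "dist M D = s - ?a - ?b - ?c" "dist M A = dist D A - (s - ?a - ?b - ?c)" using scf dst by auto
        have s2cn: "\<not> s' \<le> ?a" "\<not> s' \<le> ?a + ?b" "\<not> s' \<le> ?a + ?b + ?c" using s2cc dp by linarith+
        have s2cx: "0 \<le> s' - ?a - ?b - ?c" "s' - ?a - ?b - ?c \<le> dist D A" using s2cc sb by auto
        have s2ce: "M' = linepath D A ((s' - ?a - ?b - ?c) / dist D A)" unfolding M'_def using s2cc dp by (simp add: bpoint_def Let_def s2cn)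
        note s2cf = lp[OF _ s2cx, folded s2ce]
        have s2cs: "M' \<in> closed_segment D A" "dist M' D = s' - ?a - ?b - ?c" "dist M' A = dist D A - (s' - ?a - ?b - ?c)" using s2cf dst by auto
        have "dist M M' = \<bar>(s - ?a - ?b - ?c) - (s' - ?a - ?b - ?c)\<bar>" unfolding sce s2ce by (rule lp_same) (use dst in auto)
        then have "dist M M' = s' - s" using le by simp
        then show ?thesis by (intro fin1 arith0[OF k0 k1]) (use le in auto)
      qed
    qed
qed

theorem mainTheorem17:
  fixes A B C D :: complex and \<eta> s s' :: real
  assumes quad: "simple_quad A B C D"
    and orth: "(C - A) \<bullet> (D - B) = 0"
    and eta_pos: "\<eta> > 0"
    and angles: "\<forall>\<theta> \<in> {vertex_angle D A B, vertex_angle A B C, vertex_angle B C D, vertex_angle C D A}.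
                   \<eta> \<le> \<theta> \<and> \<theta> \<le> 2 * pi - \<eta>"
    and s: "s \<in> {0..perimeter4 A B C D}" and s': "s' \<in> {0..perimeter4 A B C D}"
  shows "dist (bpoint A B C D s) (bpoint A B C D s') \<ge> sin \<eta> / 4 * bdist A B C D s s'"
proof -
  have q: "distinct [A, B, C, D]" "closed_segment A B \<inter> closed_segment C D = {}"
    "closed_segment B C \<inter> closed_segment D A = {}" using quad by (auto simp: simple_quad_def)
  have dst: "A \<noteq> B" "B \<noteq> C" "C \<noteq> D" "D \<noteq> A" "A \<noteq> C" "B \<noteq> D" using q(1) by auto
  have ang: "\<eta> \<le> vertex_angle D A B" "vertex_angle D A B \<le> 2 * pi - \<eta>"
    "\<eta> \<le> vertex_angle A B C" "vertex_angle A B C \<le> 2 * pi - \<eta>"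
    "\<eta> \<le> vertex_angle B C D" "vertex_angle B C D \<le> 2 * pi - \<eta>"
    "\<eta> \<le> vertex_angle C D A" "vertex_angle C D A \<le> 2 * pi - \<eta>" using angles by auto
  show ?thesis
  proof (cases "s \<le> s'")
    case True
    show ?thesis using main_le[OF dst(1-4) dst(5) dst(6) orth q(2) q(3) eta_pos ang _ _ True] s s' by auto
  next
    case False
    have "sin \<eta> / 4 * bdist A B C D s' s \<le> dist (bpoint A B C D s') (bpoint A B C D s)"
      using main_le[OF dst(1-4) dst(5) dst(6) orth q(2) q(3) eta_pos ang, of s' s] False s s' by auto
    moreover have "bdist A B C D s' s = bdist A B C D s s'" by (simp add: bdist_def abs_minus_commute)
    ultimately show ?thesis by (simp add: dist_commute)
  qed
qed

end
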